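(* Let $G$ be a 2-tree on $n$ vertices with a fixed construction sequence, and let $v_1,\ldots,v_n$ be an ordering of $V(G)$ such that the graph obtained from $G$ by adding the edges $v_kv_{k+1}$ ($1\le k<n$) and $v_nv_1$ that are not already present has a plane embedding in which $(v_1,\ldots,v_n)$ is a one-sided Hamiltonian cycle with special edge $v_nv_1$. Then for every edge $e$ of $G$, $|X_R(e)|\le 2$.
   Context: A 2-tree is built from $K_3$ by repeatedly stacking a new vertex over an existing edge $xy$ (making it adjacent exactly to $x$ and $y$); fix such a construction sequence. For an edge $e$, $X(e)$ is the set of vertices stacked over $e$ in this sequence, and $S(e)$ is the set of edges created by these stackings (each joins an endpoint of $e$ to a vertex of $X(e)$). For $e=v_iv_j$ with $i<j$: $X_L(e)=\{v_k\in X(e): k<i\}$, $X_M(e)=\{v_k\in X(e): i<k<j\}$, $X_R(e)=\{v_k\in X(e): k>j\}$. One-sided Hamiltonian cycle: a plane graph on $n\ge3$ vertices has one with special edge $v_nv_1$ if $(v_1,\ldots,v_n)$ is a Hamiltonian cycle, $v_nv_1$ is on the outer face, and, with $D$ the closed bounded region bounded by the cycle, for every $j\in\{2,\ldots,n\}$ the non-cycle edges joining $v_j$ to some $v_i$ with $i<j$ are all in the interior of $D$ or all in the exterior of $D$. *)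

theory Defs
  imports "HOL-Analysis.Analysis"
begin

(* 2-trees via an explicit construction sequence: start with triangle a b c,
   then a list of steps (w,x,y) meaning: stack new vertex w over existing edge {x,y}. *)

definition tri_edges :: "'a \<Rightarrow> 'a \<Rightarrow> 'a \<Rightarrow> 'a set set" where
  "tri_edges a b c = {{a,b},{b,c},{a,c}}"

fun valid_stack :: "'a set \<Rightarrow> 'a set set \<Rightarrow> ('a \<times> 'a \<times> 'a) list \<Rightarrow> bool" where
  "valid_stack V E [] = True"
| "valid_stack V E ((w,x,y) # s) =
     (w \<notin> V \<and> {x,y} \<in> E \<and> valid_stack (insert w V) (E \<union> {{w,x},{w,y}}) s)"

fun stack_verts :: "'a set \<Rightarrow> ('a \<times> 'a \<times> 'a) list \<Rightarrow> 'a set" where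
  "stack_verts V [] = V"
| "stack_verts V ((w,x,y) # s) = stack_verts (insert w V) s"

fun stack_edges :: "'a set set \<Rightarrow> ('a \<times> 'a \<times> 'a) list \<Rightarrow> 'a set set" where
  "stack_edges E [] = E"
| "stack_edges E ((w,x,y) # s) = stack_edges (E \<union> {{w,x},{w,y}}) s"

definition is_2tree_construction :: "'a \<Rightarrow> 'a \<Rightarrow> 'a \<Rightarrow> ('a \<times> 'a \<times> 'a) list \<Rightarrow> bool" where
  "is_2tree_construction a b c s \<longleftrightarrow>
     a \<noteq> b \<and> b \<noteq> c \<and> a \<noteq> c \<and> valid_stack {a,b,c} (tri_edges a b c) s"

definition tt_V :: "'a \<Rightarrow> 'a \<Rightarrow> 'a \<Rightarrow> ('a \<times> 'a \<times> 'a) list \<Rightarrow> 'a set" where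
  "tt_V a b c s = stack_verts {a,b,c} s"

definition tt_E :: "'a \<Rightarrow> 'a \<Rightarrow> 'a \<Rightarrow> ('a \<times> 'a \<times> 'a) list \<Rightarrow> 'a set set" where
  "tt_E a b c s = stack_edges (tri_edges a b c) s"

definition stacked_over :: "('a \<times> 'a \<times> 'a) list \<Rightarrow> 'a set \<Rightarrow> 'a set" where
  "stacked_over s e = {w. \<exists>x y. (w,x,y) \<in> set s \<and> e = {x,y}}"

(* X_R(e) for e = v_i v_j, i < j, w.r.t. ordering v_1..v_n *)
definition X_R :: "(nat \<Rightarrow> 'a) \<Rightarrow> nat \<Rightarrow> ('a \<times> 'a \<times> 'a) list \<Rightarrow> nat \<Rightarrow> nat \<Rightarrow> 'a set" where
  "X_R v n s i j = {v k | k. j < k \<and> k \<le> n \<and> v k \<in> stacked_over s {v i, v j}}"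

definition cycle_edges :: "(nat \<Rightarrow> 'a) \<Rightarrow> nat \<Rightarrow> 'a set set" where
  "cycle_edges v n = {{v k, v (Suc k)} | k. 1 \<le> k \<and> k < n} \<union> {{v n, v 1}}"

definition plane_embedding ::
  "'a set \<Rightarrow> 'a set set \<Rightarrow> ('a \<Rightarrow> complex) \<Rightarrow> ('a set \<Rightarrow> real \<Rightarrow> complex) \<Rightarrow> bool" where
  "plane_embedding V E pos \<gamma> \<longleftrightarrow>
     inj_on pos V \<and>
     (\<forall>e\<in>E. \<exists>x y. e = {x,y} \<and> x \<noteq> y \<and> x \<in> V \<and> y \<in> V \<and> arc (\<gamma> e) \<and>
        ((pathstart (\<gamma> e) = pos x \<and> pathfinish (\<gamma> e) = pos y) \<or>
         (pathstart (\<gamma> e) = pos y \<and> pathfinish (\<gamma> e) = pos x)) \<and>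
        path_image (\<gamma> e) \<inter> pos ` V = {pos x, pos y}) \<and>
     (\<forall>e\<in>E. \<forall>f\<in>E. e \<noteq> f \<longrightarrow> path_image (\<gamma> e) \<inter> path_image (\<gamma> f) \<subseteq> pos ` (e \<inter> f))"

definition drawing_image :: "'a set \<Rightarrow> 'a set set \<Rightarrow> ('a \<Rightarrow> complex) \<Rightarrow> ('a set \<Rightarrow> real \<Rightarrow> complex) \<Rightarrow> complex set" where
  "drawing_image V E pos \<gamma> = pos ` V \<union> (\<Union>e\<in>E. path_image (\<gamma> e))"

definition open_edge :: "('a \<Rightarrow> complex) \<Rightarrow> ('a set \<Rightarrow> real \<Rightarrow> complex) \<Rightarrow> 'a set \<Rightarrow> complex set" where
  "open_edge pos \<gamma> e = path_image (\<gamma> e) - pos ` e"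

definition one_sided_ham_cycle ::
  "'a set \<Rightarrow> 'a set set \<Rightarrow> ('a \<Rightarrow> complex) \<Rightarrow> ('a set \<Rightarrow> real \<Rightarrow> complex) \<Rightarrow> (nat \<Rightarrow> 'a) \<Rightarrow> nat \<Rightarrow> bool" where
  "one_sided_ham_cycle V E pos \<gamma> v n \<longleftrightarrow>
     3 \<le> n \<and> bij_betw v {1..n} V \<and> cycle_edges v n \<subseteq> E \<and>
     plane_embedding V E pos \<gamma> \<and>
     path_image (\<gamma> {v n, v 1}) \<subseteq> closure (outside (drawing_image V E pos \<gamma>)) \<and>
     (let C = (\<Union>e\<in>cycle_edges v n. path_image (\<gamma> e));
          D = C \<union> inside C
      in \<forall>j\<in>{2..n}.
          (\<forall>i\<in>{1..<j}. {v i, v j} \<in> E - cycle_edges v n \<longrightarrow> open_edge pos \<gamma> {v i, v j} \<subseteq> interior D) \<or>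
          (\<forall>i\<in>{1..<j}. {v i, v j} \<in> E - cycle_edges v n \<longrightarrow> open_edge pos \<gamma> {v i, v j} \<subseteq> - D))"

end

theory Submission
  imports Defs
begin


lemma jordan2:
  fixes c1 c2 :: "real \<Rightarrow> complex"
  assumes "arc c1" "arc c2" "pathstart c1 = p" "pathfinish c1 = q"
    "pathstart c2 = p" "pathfinish c2 = q" "path_image c1 \<inter> path_image c2 = {p,q}"
    and T: "T = path_image c1 \<union> path_image c2"
  shows "inside T \<noteq> {}" "open (inside T)" "connected (inside T)" "open (outside T)"
    "connected (outside T)" "bounded (inside T)" "\<not> bounded (outside T)"
    "frontier (inside T) = T" "frontier (outside T) = T"
    "closure (inside T) = inside T \<union> T" "closure (outside T) = outside T \<union> T"
proof -
  have sp: "simple_path (c1 +++ reversepath c2)"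
    using assms by (auto simp: simple_path_join_loop_eq arc_reversepath)
  have e: "path_image (c1 +++ reversepath c2) = T"
    using assms by (simp add: path_image_join)
  have "pathfinish (c1 +++ reversepath c2) = pathstart (c1 +++ reversepath c2)"
    using assms by simp
  note J = Jordan_inside_outside[OF sp this, unfolded e]
  show "inside T \<noteq> {}" "open (inside T)" "connected (inside T)" "open (outside T)"
    "connected (outside T)" "bounded (inside T)" "\<not> bounded (outside T)"
    "frontier (inside T) = T" "frontier (outside T) = T"
    using J by auto
  show "closure (inside T) = inside T \<union> T" "closure (outside T) = outside T \<union> T"
    using J closure_Un_frontier by metis+
qed

lemma conn_side:
  fixes T :: "complex set"
  assumes "connected S" "S \<inter> T = {}" "open (inside T)" "open (outside T)"
  shows "S \<subseteq> inside T \<or> S \<subseteq> outside T"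
proof -
  have "S \<subseteq> inside T \<union> outside T" using assms(2)
    by (auto simp: outside_inside)
  moreover have "inside T \<inter> outside T = {}" by (simp add: inside_Int_outside)
  ultimately show ?thesis
    using connectedD[OF assms(1) assms(3) assms(4)] by blast
qed

lemma arc_closure_endless:
  fixes e :: "real \<Rightarrow> complex"
  assumes "arc e"
  shows "path_image e \<subseteq> closure (path_image e - {pathstart e, pathfinish e})"
proof -
  have inj: "inj_on e {0..1}" using assms arc_imp_inj_on by blast
  have "e ` {0<..<1} \<subseteq> path_image e - {pathstart e, pathfinish e}"
  proof
    fix z assume "z \<in> e ` {0<..<1}"
    then obtain t where t: "t \<in> {0<..<1}" "z = e t" by blast
    have "e t \<noteq> e 0" using inj t by (metis atLeastAtMost_iff greaterThanLessThan_iff inj_on_eq_iff less_eq_real_def order_less_irrefl zero_le_one)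
    moreover have "e t \<noteq> e 1" using inj t by (metis atLeastAtMost_iff greaterThanLessThan_iff inj_on_eq_iff less_eq_real_def order_less_irrefl zero_le_one)
    ultimately show "z \<in> path_image e - {pathstart e, pathfinish e}"
      using t by (auto simp: path_image_def pathstart_def pathfinish_def)
  qed
  moreover have "continuous_on (closure {0<..<(1::real)}) e"
    by (metis arc_imp_path assms closure_greaterThanLessThan path_def zero_less_one)
  ultimately have "e ` closure {0<..<(1::real)} \<subseteq> closure (path_image e - {pathstart e, pathfinish e})"
    using image_closure_subset[of "{0<..<(1::real)}" e] by (meson closed_closure closure_subset order_trans)
  then show ?thesis by (simp add: path_image_def)
qed

lemma closure_inside_sub:
  fixes T :: "complex set"
  assumes "frontier (inside T) = T"
  shows "closure (inside T) = inside T \<union> T"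
  using assms closure_Un_frontier by metis

lemma theta:
  fixes c1 c2 d :: "real \<Rightarrow> complex"
  assumes arcs: "arc c1" "arc c2" "arc d"
    and ends: "pathstart c1 = p" "pathfinish c1 = q" "pathstart c2 = p" "pathfinish c2 = q"
      "pathstart d = p" "pathfinish d = q"
    and i12: "path_image c1 \<inter> path_image c2 = {p,q}"
    and i1d: "path_image c1 \<inter> path_image d = {p,q}"
    and i2d: "path_image c2 \<inter> path_image d = {p,q}"
    and dout: "path_image d - {p,q} \<subseteq> outside (path_image c1 \<union> path_image c2)"
  shows "path_image c2 - {p,q} \<subseteq> inside (path_image c1 \<union> path_image d) \<or>
         path_image c1 - {p,q} \<subseteq> inside (path_image c2 \<union> path_image d)"
proof (rule ccontr)
  define C where "C = path_image c1 \<union> path_image c2"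
  define A1 where "A1 = path_image c1 \<union> path_image d"
  define A2 where "A2 = path_image c2 \<union> path_image d"
  define I where "I = inside C"
  define J1 where "J1 = inside A1"
  define J2 where "J2 = inside A2"
  assume neg: "\<not> (path_image c2 - {p,q} \<subseteq> inside (path_image c1 \<union> path_image d) \<or>
         path_image c1 - {p,q} \<subseteq> inside (path_image c2 \<union> path_image d))"
  then have neg1: "\<not> path_image c2 - {p,q} \<subseteq> J1" and neg2: "\<not> path_image c1 - {p,q} \<subseteq> J2"
    unfolding J1_def J2_def A1_def A2_def by auto
  note JC = jordan2[OF arcs(1,2) ends(1-4) i12 C_def]
  note JA1 = jordan2[OF arcs(1,3) ends(1,2,5,6) i1d A1_def]
  note JA2 = jordan2[OF arcs(2,3) ends(3-6) i2d A2_def]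
  have sp: "simple_path c1" "simple_path c2" "simple_path d" using arcs arc_imp_simple_path by auto
  have IC: "I \<inter> C = {}" unfolding I_def by (simp add: inside_no_overlap)
  have IA1: "J1 \<inter> A1 = {}" unfolding J1_def by (simp add: inside_no_overlap)
  have IA2: "J2 \<inter> A2 = {}" unfolding J2_def by (simp add: inside_no_overlap)
  have OI1: "J1 \<inter> outside A1 = {}" unfolding J1_def by (simp add: inside_Int_outside)
  have OI2: "J2 \<inter> outside A2 = {}" unfolding J2_def by (simp add: inside_Int_outside)
  have OIC: "I \<inter> outside C = {}" unfolding I_def by (simp add: inside_Int_outside)
  have pq: "p \<in> path_image c1" "q \<in> path_image c1" "p \<in> path_image c2" "q \<in> path_image c2"
    using ends by (metis pathstart_in_path_image pathfinish_in_path_image)+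
  have c2o: "path_image c2 - {p,q} \<subseteq> outside A1"
  proof -
    have "connected (path_image c2 - {p,q})" using connected_simple_path_endless[OF sp(2)] ends by simp
    moreover have "(path_image c2 - {p,q}) \<inter> A1 = {}" unfolding A1_def using i12 i2d by blast
    ultimately have "path_image c2 - {p,q} \<subseteq> J1 \<or> path_image c2 - {p,q} \<subseteq> outside A1"
      using conn_side[of "path_image c2 - {p,q}" A1, OF _ _ JA1(2) JA1(4)] unfolding J1_def by blast
    then show ?thesis using neg1 by blast
  qed
  have c1o: "path_image c1 - {p,q} \<subseteq> outside A2"
  proof -
    have "connected (path_image c1 - {p,q})" using connected_simple_path_endless[OF sp(1)] ends by simp
    moreover have "(path_image c1 - {p,q}) \<inter> A2 = {}" unfolding A2_def using i12 i1d by blast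
    ultimately have "path_image c1 - {p,q} \<subseteq> J2 \<or> path_image c1 - {p,q} \<subseteq> outside A2"
      using conn_side[of "path_image c1 - {p,q}" A2, OF _ _ JA2(2) JA2(4)] unfolding J2_def by blast
    then show ?thesis using neg2 by blast
  qed
  obtain z2 where z2: "z2 \<in> path_image c2" "z2 \<noteq> p" "z2 \<noteq> q"
    using nonempty_simple_path_endless[OF sp(2)] ends by auto
  obtain z1 where z1: "z1 \<in> path_image c1" "z1 \<noteq> p" "z1 \<noteq> q"
    using nonempty_simple_path_endless[OF sp(1)] ends by auto
  have z2o: "z2 \<in> outside A1" using z2 c2o by blast
  have z1o: "z1 \<in> outside A2" using z1 c1o by blast
  have z2n: "z2 \<notin> A1" using z2 i12 i2d unfolding A1_def by blast
  have z1n: "z1 \<notin> A2" using z1 i12 i1d unfolding A2_def by blast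
  have Id: "I \<inter> path_image d = {}"
  proof -
    have "path_image d \<subseteq> outside C \<union> C" using dout pq unfolding C_def by blast
    then show ?thesis using IC OIC by blast
  qed
  have IA1e: "I \<inter> A1 = {}" using IC Id unfolding A1_def C_def by blast
  have IA2e: "I \<inter> A2 = {}" using IC Id unfolding A2_def C_def by blast
  have clI: "closure I = I \<union> C" using JC(10) unfolding I_def .
  have "I \<subseteq> J1 \<or> I \<subseteq> outside A1"
    using conn_side[OF JC(3) IA1e[unfolded I_def] JA1(2) JA1(4)] unfolding I_def J1_def .
  moreover have "outside A1 \<inter> I \<noteq> {}"
  proof -
    have "z2 \<in> closure I" using clI z2 unfolding C_def by blast
    then show ?thesis using z2o open_Int_closure_eq_empty[of "outside A1" I] JA1(4) by blast
  qed
  ultimately have I1: "I \<subseteq> outside A1" using OI1 by blast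
  have "I \<subseteq> J2 \<or> I \<subseteq> outside A2"
    using conn_side[OF JC(3) IA2e[unfolded I_def] JA2(2) JA2(4)] unfolding I_def J2_def .
  moreover have "outside A2 \<inter> I \<noteq> {}"
  proof -
    have "z1 \<in> closure I" using clI z1 unfolding C_def by blast
    then show ?thesis using z1o open_Int_closure_eq_empty[of "outside A2" I] JA2(4) by blast
  qed
  ultimately have I2: "I \<subseteq> outside A2" using OI2 by blast
  have J1A2: "J1 \<inter> A2 = {}"
  proof -
    have s: "A2 \<subseteq> (path_image c2 - {p,q}) \<union> A1" unfolding A2_def A1_def using pq by blast
    have "J1 \<inter> (path_image c2 - {p,q}) = {}" using c2o OI1 by blast
    with s IA1 show ?thesis by blast
  qed
  have J2A1: "J2 \<inter> A1 = {}"
  proof -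
    have s: "A1 \<subseteq> (path_image c1 - {p,q}) \<union> A2" unfolding A2_def A1_def using pq by blast
    have "J2 \<inter> (path_image c1 - {p,q}) = {}" using c1o OI2 by blast
    with s IA2 show ?thesis by blast
  qed
  have cl1: "closure J1 = J1 \<union> A1" using JA1(10) unfolding J1_def .
  have cl2: "closure J2 = J2 \<union> A2" using JA2(10) unfolding J2_def .
  have J1o: "J1 \<subseteq> outside A2"
  proof -
    have "J1 \<subseteq> J2 \<or> J1 \<subseteq> outside A2"
      using conn_side[OF JA1(3) J1A2[unfolded J1_def] JA2(2) JA2(4)] unfolding J1_def J2_def .
    moreover have "\<not> J1 \<subseteq> J2"
    proof
      assume "J1 \<subseteq> J2"
      then have "closure J1 \<subseteq> closure J2" by (rule closure_mono)
      moreover have "z1 \<in> closure J1" using cl1 z1 unfolding A1_def by blast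
      ultimately have "z1 \<in> J2 \<union> A2" using cl2 by blast
      then show False using z1n z1o OI2 by blast
    qed
    ultimately show ?thesis by blast
  qed
  have J2o: "J2 \<subseteq> outside A1"
  proof -
    have "J2 \<subseteq> J1 \<or> J2 \<subseteq> outside A1"
      using conn_side[OF JA2(3) J2A1[unfolded J2_def] JA1(2) JA1(4)] unfolding J1_def J2_def .
    moreover have "\<not> J2 \<subseteq> J1"
    proof
      assume "J2 \<subseteq> J1"
      then have "closure J2 \<subseteq> closure J1" by (rule closure_mono)
      moreover have "z2 \<in> closure J2" using cl2 z2 unfolding A2_def by blast
      ultimately have "z2 \<in> J1 \<union> A1" using cl1 by blast
      then show False using z2n z2o OI1 by blast
    qed
    ultimately show ?thesis by blast
  qed
  have OA1: "outside A1 \<inter> A1 = {}" by (simp add: outside_no_overlap)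
  have OA2: "outside A2 \<inter> A2 = {}" by (simp add: outside_no_overlap)
  have A12: "A1 \<inter> A2 = path_image d" unfolding A1_def A2_def using i12 pq i1d by blast
  have inter: "closure J1 \<inter> closure J2 = path_image d"
  proof -
    have "J1 \<inter> J2 = {}" using J1o OI2 by blast
    then show ?thesis unfolding cl1 cl2 using J1A2 J2A1 A12 by blast
  qed
  have W: "connected (- (closure J1 \<union> closure J2))"
  proof (rule Janiszewski_connected)
    show "compact (closure J1)" using JA1(6) compact_closure unfolding J1_def by blast
    show "closed (closure J2)" by simp
    show "connected (closure J1 \<inter> closure J2)"
      using inter arcs(3) by (simp add: arc_imp_path connected_path_image)
    have "- closure J1 = outside A1" using cl1 unfolding J1_def by (auto simp: outside_inside)
    then show "connected (- closure J1)" using JA1(5) by simp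
    have "- closure J2 = outside A2" using cl2 unfolding J2_def by (auto simp: outside_inside)
    then show "connected (- closure J2)" using JA2(5) by simp
  qed
  define W where "W = - (closure J1 \<union> closure J2)"
  have CA: "C \<subseteq> A1 \<union> A2" unfolding C_def A1_def A2_def by blast
  have WC: "W \<subseteq> I \<union> outside C"
  proof -
    have "W \<inter> C = {}" unfolding W_def cl1 cl2 using CA by blast
    then show ?thesis unfolding I_def by (auto simp: outside_inside)
  qed
  have WI: "I \<subseteq> W"
  proof -
    have "I \<inter> (closure J1 \<union> closure J2) = {}"
      unfolding cl1 cl2 using I1 I2 OI1 OI2 OA1 OA2 by blast
    then show ?thesis unfolding W_def by blast
  qed
  have "bounded (closure J1 \<union> closure J2)"
    using bounded_closure[OF JA1(6)] bounded_closure[OF JA2(6)] unfolding J1_def J2_def by simp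
  then have "\<not> outside C \<subseteq> closure J1 \<union> closure J2"
    using JC(7) bounded_subset[of "closure J1 \<union> closure J2" "outside C"] by auto
  then have WO: "W \<inter> outside C \<noteq> {}" unfolding W_def by blast
  have "I \<inter> W = {} \<or> outside C \<inter> W = {}"
    by (rule connectedD[OF W[folded W_def] JC(2)[folded I_def] JC(4)]) (use OIC WC in auto)
  then show False using WI WO JC(1) unfolding I_def by blast
qed

lemma cross_out_half:
  fixes c1 c2 d e :: "real \<Rightarrow> complex"
  assumes arcs: "arc c1" "arc c2" "arc d" "arc e"
    and ends: "pathstart c1 = p" "pathfinish c1 = q" "pathstart c2 = p" "pathfinish c2 = q"
      "pathstart d = p" "pathfinish d = q" "pathstart e = x" "pathfinish e = y"
    and i12: "path_image c1 \<inter> path_image c2 = {p,q}"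
    and i1d: "path_image c1 \<inter> path_image d = {p,q}"
    and i2d: "path_image c2 \<inter> path_image d = {p,q}"
    and xy: "x \<in> path_image c1" "x \<notin> path_image c2" "y \<in> path_image c2" "y \<notin> path_image c1"
    and ed: "path_image e \<inter> path_image d = {}"
    and c2in: "path_image c2 - {p,q} \<subseteq> inside (path_image c1 \<union> path_image d)"
    and eout: "path_image e - {x,y} \<subseteq> outside (path_image c1 \<union> path_image c2)"
  shows False
proof -
  define C where "C = path_image c1 \<union> path_image c2"
  define A1 where "A1 = path_image c1 \<union> path_image d"
  define A3 where "A3 = path_image d \<union> path_image c2"
  define Eo where "Eo = path_image e - {x,y}"
  have sp: "simple_path c1" "simple_path c2" "simple_path d" "simple_path e"
    using arcs arc_imp_simple_path by auto
  have pq: "p \<in> path_image c1" "q \<in> path_image c1" "p \<in> path_image c2" "q \<in> path_image c2"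
    using ends by (metis pathstart_in_path_image pathfinish_in_path_image)+
  have pneq: "p \<noteq> q" using arcs(1) ends arc_distinct_ends by metis
  obtain z2 where z2: "z2 \<in> path_image c2 - {p,q}" using nonempty_simple_path_endless[OF sp(2)] ends by auto
  have ne: "path_image c2 \<inter> inside A1 \<noteq> {}" using z2 c2in unfolding A1_def by blast
  have i2d': "path_image d \<inter> path_image c2 = {p,q}" using i2d by blast
  have spl: "inside C \<union> inside A3 \<union> (path_image c2 - {p,q}) = inside A1"
    using split_inside_simple_closed_curve[OF sp(1) ends(1,2) sp(3) ends(5,6) sp(2) ends(3,4) pneq i1d i12 i2d' ne[unfolded A1_def]]
    unfolding C_def A1_def A3_def by blast
  note JA1 = jordan2[OF arcs(1,3) ends(1,2,5,6) i1d A1_def]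
  note JA3 = jordan2[OF arcs(3,2) ends(5,6,3,4) i2d' A3_def]
  have OC: "outside C \<inter> C = {}" by (simp add: outside_no_overlap)
  have OIC: "inside C \<inter> outside C = {}" by (simp add: inside_Int_outside)
  have OI1: "inside A1 \<inter> outside A1 = {}" by (simp add: inside_Int_outside)
  have IA1: "inside A1 \<inter> A1 = {}" by (simp add: inside_no_overlap)
  have conE: "connected Eo" using connected_simple_path_endless[OF sp(4)] ends unfolding Eo_def by simp
  have clE: "path_image e \<subseteq> closure Eo" using arc_closure_endless[OF arcs(4)] ends unfolding Eo_def by simp
  have xe: "x \<in> path_image e" "y \<in> path_image e"
    using ends by (metis pathstart_in_path_image pathfinish_in_path_image)+
  have xd: "x \<notin> path_image d" "y \<notin> path_image d" using xe ed by blast+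
  have eoC: "Eo \<subseteq> outside C" using eout unfolding Eo_def C_def .
  have "Eo \<inter> A1 = {}" using eoC OC ed unfolding Eo_def A1_def C_def by blast
  then have "Eo \<subseteq> inside A1 \<or> Eo \<subseteq> outside A1"
    using conn_side[OF conE _ JA1(2) JA1(4)] by blast
  then show False
  proof
    assume "Eo \<subseteq> inside A1"
    moreover have "Eo \<inter> path_image c2 = {}" using eoC OC unfolding C_def by blast
    ultimately have "Eo \<subseteq> inside A3" using spl eoC OIC by blast
    then have "closure Eo \<subseteq> inside A3 \<union> A3"
      using JA3(10) closure_mono[of Eo "inside A3"] by simp
    then have "x \<in> inside A3" using clE xe xy xd unfolding A3_def by blast
    then show False using spl IA1 xy unfolding A1_def by blast
  next
    assume "Eo \<subseteq> outside A1"
    then have "closure Eo \<subseteq> outside A1 \<union> A1"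
      using JA1(11) closure_mono[of Eo "outside A1"] by simp
    then have "y \<in> outside A1" using clE xe xy xd unfolding A1_def by blast
    moreover have "y \<in> path_image c2 - {p,q}" using xy pq by blast
    ultimately show False using c2in OI1 unfolding A1_def by blast
  qed
qed

lemma crossing:
  fixes c1 c2 d e :: "real \<Rightarrow> complex"
  assumes arcs: "arc c1" "arc c2" "arc d" "arc e"
    and ends: "pathstart c1 = p" "pathfinish c1 = q" "pathstart c2 = p" "pathfinish c2 = q"
      "pathstart d = p" "pathfinish d = q" "pathstart e = x" "pathfinish e = y"
    and i12: "path_image c1 \<inter> path_image c2 = {p,q}"
    and i1d: "path_image c1 \<inter> path_image d = {p,q}"
    and i2d: "path_image c2 \<inter> path_image d = {p,q}"
    and xy: "x \<in> path_image c1" "x \<notin> path_image c2" "y \<in> path_image c2" "y \<notin> path_image c1"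
    and ed: "path_image e \<inter> path_image d = {}"
    and side: "(path_image d - {p,q} \<subseteq> inside (path_image c1 \<union> path_image c2) \<and>
               path_image e - {x,y} \<subseteq> inside (path_image c1 \<union> path_image c2)) \<or>
              (path_image d - {p,q} \<subseteq> outside (path_image c1 \<union> path_image c2) \<and>
               path_image e - {x,y} \<subseteq> outside (path_image c1 \<union> path_image c2))"
  shows False
  using side
proof
  assume ins: "path_image d - {p,q} \<subseteq> inside (path_image c1 \<union> path_image c2) \<and>
               path_image e - {x,y} \<subseteq> inside (path_image c1 \<union> path_image c2)"
  define C where "C = path_image c1 \<union> path_image c2"
  define K1 where "K1 = path_image c1 \<union> path_image d"
  define K2 where "K2 = path_image c2 \<union> path_image d"
  define Eo where "Eo = path_image e - {x,y}"
  have sp: "simple_path c1" "simple_path c2" "simple_path d" "simple_path e"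
    using arcs arc_imp_simple_path by auto
  have pneq: "p \<noteq> q" using arcs(1) ends arc_distinct_ends by metis
  obtain z where z: "z \<in> path_image d - {p,q}" using nonempty_simple_path_endless[OF sp(3)] ends by auto
  have ne: "path_image d \<inter> inside C \<noteq> {}" using z ins unfolding C_def by blast
  have spl: "inside K1 \<inter> inside K2 = {}" "inside K1 \<union> inside K2 \<union> (path_image d - {p,q}) = inside C"
    using split_inside_simple_closed_curve[OF sp(1) ends(1,2) sp(2) ends(3,4) sp(3) ends(5,6) pneq i12 i1d i2d ne[unfolded C_def]]
    unfolding C_def K1_def K2_def by blast+
  note JK1 = jordan2[OF arcs(1,3) ends(1,2,5,6) i1d K1_def]
  note JK2 = jordan2[OF arcs(2,3) ends(3-6) i2d K2_def]
  have IC: "inside C \<inter> C = {}" by (simp add: inside_no_overlap)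
  have conE: "connected Eo" using connected_simple_path_endless[OF sp(4)] ends unfolding Eo_def by simp
  have clE: "path_image e \<subseteq> closure Eo" using arc_closure_endless[OF arcs(4)] ends unfolding Eo_def by simp
  have xe: "x \<in> path_image e" "y \<in> path_image e"
    using ends by (metis pathstart_in_path_image pathfinish_in_path_image)+
  have xd: "x \<notin> path_image d" "y \<notin> path_image d" using xe ed by blast+
  have EK: "Eo \<subseteq> inside K1 \<union> inside K2"
    using ins spl(2) ed unfolding Eo_def C_def by blast
  have "inside K1 \<inter> Eo = {} \<or> inside K2 \<inter> Eo = {}"
    by (rule connectedD[OF conE JK1(2) JK2(2)]) (use spl(1) EK in auto)
  then show False
  proof
    assume "inside K2 \<inter> Eo = {}"
    then have "Eo \<subseteq> inside K1" using EK by blast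
    then have "closure Eo \<subseteq> inside K1 \<union> K1" using JK1(10) closure_mono[of Eo "inside K1"] by simp
    then have "y \<in> inside K1" using clE xe xy xd unfolding K1_def by blast
    then have "y \<in> inside C" using spl(2) by blast
    then show False using IC xy unfolding C_def by blast
  next
    assume "inside K1 \<inter> Eo = {}"
    then have "Eo \<subseteq> inside K2" using EK by blast
    then have "closure Eo \<subseteq> inside K2 \<union> K2" using JK2(10) closure_mono[of Eo "inside K2"] by simp
    then have "x \<in> inside K2" using clE xe xy xd unfolding K2_def by blast
    then have "x \<in> inside C" using spl(2) by blast
    then show False using IC xy unfolding C_def by blast
  qed
next
  assume out: "path_image d - {p,q} \<subseteq> outside (path_image c1 \<union> path_image c2) \<and>
               path_image e - {x,y} \<subseteq> outside (path_image c1 \<union> path_image c2)"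
  have "path_image c2 - {p,q} \<subseteq> inside (path_image c1 \<union> path_image d) \<or>
         path_image c1 - {p,q} \<subseteq> inside (path_image c2 \<union> path_image d)"
    using theta[OF arcs(1-3) ends(1-6) i12 i1d i2d] out by blast
  then show False
  proof
    assume "path_image c2 - {p,q} \<subseteq> inside (path_image c1 \<union> path_image d)"
    then show False using cross_out_half[OF arcs ends i12 i1d i2d xy ed] out by blast
  next
    assume h: "path_image c1 - {p,q} \<subseteq> inside (path_image c2 \<union> path_image d)"
    have i21: "path_image c2 \<inter> path_image c1 = {p,q}" using i12 by blast
    have "path_image (reversepath e) - {y,x} \<subseteq> outside (path_image c2 \<union> path_image c1)"
      using out by (auto simp: Un_commute)
    moreover have "path_image (reversepath e) \<inter> path_image d = {}" using ed by simp
    ultimately show False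
      using cross_out_half[OF arcs(2,1,3) arc_reversepath[OF arcs(4)] ends(3,4,1,2,5,6) _ _ i21 i2d i1d
          xy(3,4,1,2) _ h] ends(7,8) by simp
  qed
qed



fun chp :: "(nat \<Rightarrow> real \<Rightarrow> complex) \<Rightarrow> nat \<Rightarrow> real \<Rightarrow> complex" where
  "chp f 0 = f 0"
| "chp f (Suc 0) = f 0"
| "chp f (Suc (Suc m)) = chp f (Suc m) +++ f (Suc m)"

lemma chain_lemma:
  fixes f :: "nat \<Rightarrow> real \<Rightarrow> complex" and z :: "nat \<Rightarrow> complex"
  assumes "1 \<le> L"
    and fa: "\<And>t. t < L \<Longrightarrow> arc (f t) \<and> pathstart (f t) = z t \<and> pathfinish (f t) = z (Suc t)"
    and fi: "\<And>t l. t < l \<Longrightarrow> l < L \<Longrightarrow>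
       path_image (f t) \<inter> path_image (f l) \<subseteq> (if l = Suc t then {z l} else {})"
  shows "arc (chp f L) \<and> pathstart (chp f L) = z 0 \<and> pathfinish (chp f L) = z L \<and>
         path_image (chp f L) = (\<Union>t<L. path_image (f t))"
  using assms(1) fa fi
proof (induction L rule: nat_induct_at_least)
  case base
  from base(1)[of 0] show ?case by (simp add: lessThan_Suc)
next
  case (Suc L)
  have IH: "arc (chp f L) \<and> pathstart (chp f L) = z 0 \<and> pathfinish (chp f L) = z L \<and>
         path_image (chp f L) = (\<Union>t<L. path_image (f t))"
  proof (rule Suc.IH)
    fix t assume "t < L" then show "arc (f t) \<and> pathstart (f t) = z t \<and> pathfinish (f t) = z (Suc t)"
      using Suc.prems(1)[of t] by simp
  next
    fix t l assume "t < l" "l < L" then show "path_image (f t) \<inter> path_image (f l) \<subseteq> (if l = Suc t then {z l} else {})"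
      using Suc.prems(2)[of t l] by simp
  qed
  obtain m where m: "L = Suc m" using Suc.hyps by (cases L) auto
  have eq: "chp f (Suc L) = chp f L +++ f L" using m by simp
  have fL: "arc (f L) \<and> pathstart (f L) = z L \<and> pathfinish (f L) = z (Suc L)"
    using Suc.prems(1)[of L] by simp
  have int: "path_image (chp f L) \<inter> path_image (f L) \<subseteq> {pathstart (f L)}"
  proof -
    have "path_image (f t) \<inter> path_image (f L) \<subseteq> {z L}" if "t < L" for t
    proof -
      have "path_image (f t) \<inter> path_image (f L) \<subseteq> (if L = Suc t then {z L} else {})"
        using Suc.prems(2)[of t L] that by simp
      then show ?thesis by (auto split: if_splits)
    qed
    then have "(\<Union>t<L. path_image (f t)) \<inter> path_image (f L) \<subseteq> {z L}" by blast
    moreover have "path_image (chp f L) = (\<Union>t<L. path_image (f t))" using IH by (rule conjunct2[OF conjunct2[OF conjunct2]])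
    ultimately show ?thesis using fL by simp
  qed
  have "arc (chp f L +++ f L)" using arc_join[of "chp f L" "f L"] IH fL int by simp
  moreover have "path_image (chp f L +++ f L) = (\<Union>t<Suc L. path_image (f t))"
  proof -
    have "path_image (chp f L +++ f L) = path_image (chp f L) \<union> path_image (f L)"
      using IH fL by (simp add: path_image_join)
    then show ?thesis using IH by (simp add: lessThan_Suc Un_commute)
  qed
  ultimately show ?case using eq IH fL by simp
qed

definition nx :: "nat \<Rightarrow> nat \<Rightarrow> nat" where "nx n m = (if m < n then Suc m else 1)"
definition idx :: "nat \<Rightarrow> nat \<Rightarrow> nat \<Rightarrow> nat" where
  "idx n a t = (if a + t \<le> n then a + t else a + t - n)"

lemma idx_range: "a \<in> {1..n} \<Longrightarrow> t < n \<Longrightarrow> idx n a t \<in> {1..n}"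
  by (auto simp: idx_def)

lemma idx_inj: "a \<in> {1..n} \<Longrightarrow> inj_on (idx n a) {0..<n}"
  unfolding inj_on_def idx_def by auto

lemma idx_nx: "a \<in> {1..n} \<Longrightarrow> Suc t < n \<Longrightarrow> nx n (idx n a t) = idx n a (Suc t)"
  by (auto simp: idx_def nx_def)

lemma idx_image: "a \<in> {1..n} \<Longrightarrow> L < n \<Longrightarrow>
   idx n a ` {0..L} = (if a + L \<le> n then {a..a+L} else {a..n} \<union> {1..a+L-n})"
proof -
  assume a: "a \<in> {1..n}" and L: "L < n"
  show ?thesis
  proof (cases "a + L \<le> n")
    case True
    have "idx n a ` {0..L} = {a..a+L}"
    proof
      show "idx n a ` {0..L} \<subseteq> {a..a+L}" using True by (auto simp: idx_def)
      show "{a..a+L} \<subseteq> idx n a ` {0..L}"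
      proof
        fix w assume "w \<in> {a..a+L}"
        then have "w = idx n a (w - a)" "w - a \<in> {0..L}" using True by (auto simp: idx_def)
        then show "w \<in> idx n a ` {0..L}" by blast
      qed
    qed
    then show ?thesis using True by simp
  next
    case False
    have "idx n a ` {0..L} = {a..n} \<union> {1..a+L-n}"
    proof
      show "idx n a ` {0..L} \<subseteq> {a..n} \<union> {1..a+L-n}" using False a L by (auto simp: idx_def)
      show "{a..n} \<union> {1..a+L-n} \<subseteq> idx n a ` {0..L}"
      proof
        fix w assume w: "w \<in> {a..n} \<union> {1..a+L-n}"
        show "w \<in> idx n a ` {0..L}"
        proof (cases "w \<ge> a")
          case True
          then have "w = idx n a (w - a)" "w - a \<in> {0..L}" using w False a L by (auto simp: idx_def)
          then show ?thesis by blast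
        next
          case F: False
          then have "w = idx n a (w + n - a)" "w + n - a \<in> {0..L}" using w False a by (auto simp: idx_def)
          then show ?thesis by blast
        qed
      qed
    qed
    then show ?thesis using False by simp
  qed
qed



locale cyc =
  fixes n :: nat and P :: "nat \<Rightarrow> complex" and G :: "nat \<Rightarrow> real \<Rightarrow> complex"
  assumes n3: "3 \<le> n" and Pinj: "inj_on P {1..n}"
  and Garc: "\<And>m. m \<in> {1..n} \<Longrightarrow> arc (G m)"
  and Gs: "\<And>m. m \<in> {1..n} \<Longrightarrow> pathstart (G m) = P m"
  and Gf: "\<And>m. m \<in> {1..n} \<Longrightarrow> pathfinish (G m) = P (nx n m)"
  and Gv: "\<And>m w. m \<in> {1..n} \<Longrightarrow> w \<in> {1..n} \<Longrightarrow> P w \<in> path_image (G m) \<Longrightarrow> w = m \<or> w = nx n m"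
  and Gi: "\<And>m m'. m \<in> {1..n} \<Longrightarrow> m' \<in> {1..n} \<Longrightarrow> m \<noteq> m' \<Longrightarrow>
      path_image (G m) \<inter> path_image (G m') \<subseteq> P ` ({m, nx n m} \<inter> {m', nx n m'})"
begin

definition ch where "ch a L = chp (\<lambda>t. G (idx n a t)) L"

lemma ch_props:
  assumes a: "a \<in> {1..n}" and L: "1 \<le> L" "L < n"
  shows "arc (ch a L) \<and> pathstart (ch a L) = P a \<and> pathfinish (ch a L) = P (idx n a L) \<and>
         path_image (ch a L) = (\<Union>t<L. path_image (G (idx n a t)))"
proof -
  have inj: "inj_on (idx n a) {0..<n}" using idx_inj[OF a] .
  have "arc (chp (\<lambda>t. G (idx n a t)) L) \<and> pathstart (chp (\<lambda>t. G (idx n a t)) L) = (\<lambda>t. P (idx n a t)) 0 \<and>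
     pathfinish (chp (\<lambda>t. G (idx n a t)) L) = (\<lambda>t. P (idx n a t)) L \<and>
     path_image (chp (\<lambda>t. G (idx n a t)) L) = (\<Union>t<L. path_image (G (idx n a t)))"
  proof (rule chain_lemma[OF L(1)])
    fix t assume t: "t < L"
    have m: "idx n a t \<in> {1..n}" using idx_range[OF a] t L by simp
    have "nx n (idx n a t) = idx n a (Suc t)" using idx_nx[OF a] t L by simp
    then show "arc (G (idx n a t)) \<and> pathstart (G (idx n a t)) = P (idx n a t) \<and>
          pathfinish (G (idx n a t)) = P (idx n a (Suc t))"
      using Garc[OF m] Gs[OF m] Gf[OF m] by simp
  next
    fix t l assume tl: "t < l" "l < L"
    have m: "idx n a t \<in> {1..n}" "idx n a l \<in> {1..n}" using idx_range[OF a] tl L by simp_all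
    have ne: "idx n a t \<noteq> idx n a l" using inj tl L by (auto simp: inj_on_eq_iff)
    have nx1: "nx n (idx n a t) = idx n a (Suc t)" using idx_nx[OF a] tl L by simp
    have nx2: "nx n (idx n a l) = idx n a (Suc l)" using idx_nx[OF a] tl L by simp
    have sub: "{idx n a t, idx n a (Suc t)} \<inter> {idx n a l, idx n a (Suc l)} \<subseteq> (if l = Suc t then {idx n a l} else {})"
    proof -
      have "idx n a t \<noteq> idx n a (Suc l)" using inj tl L by (auto simp: inj_on_eq_iff)
      moreover have "idx n a (Suc t) \<noteq> idx n a (Suc l)" using inj tl L by (auto simp: inj_on_eq_iff)
      moreover have "l \<noteq> Suc t \<Longrightarrow> idx n a (Suc t) \<noteq> idx n a l" using inj tl L by (auto simp: inj_on_eq_iff)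
      ultimately show ?thesis using ne by auto
    qed
    have "path_image (G (idx n a t)) \<inter> path_image (G (idx n a l)) \<subseteq>
          P ` ({idx n a t, idx n a (Suc t)} \<inter> {idx n a l, idx n a (Suc l)})"
      using Gi[OF m ne] nx1 nx2 by simp
    also have "\<dots> \<subseteq> P ` (if l = Suc t then {idx n a l} else {})" using sub by (rule image_mono)
    also have "\<dots> = (if l = Suc t then {P (idx n a l)} else {})" by simp
    finally show "path_image (G (idx n a t)) \<inter> path_image (G (idx n a l)) \<subseteq>
          (if l = Suc t then {P (idx n a l)} else {})" .
  qed
  moreover have "idx n a 0 = a" using a by (simp add: idx_def)
  ultimately show ?thesis unfolding ch_def by simp
qed

lemma ch_img:
  assumes a: "a \<in> {1..n}" and L: "1 \<le> L" "L < n"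
  shows "path_image (ch a L) = (\<Union>t<L. path_image (G (idx n a t)))"
  using ch_props[OF assms] by (rule conjunct2[OF conjunct2[OF conjunct2]])

lemma ch_vert:
  assumes a: "a \<in> {1..n}" and L: "1 \<le> L" "L < n" and w: "w \<in> {1..n}"
    and Pw: "P w \<in> path_image (ch a L)"
  shows "w \<in> idx n a ` {0..L}"
proof -
  obtain t where t: "t < L" "P w \<in> path_image (G (idx n a t))" using Pw ch_img[OF a L] by auto
  have m: "idx n a t \<in> {1..n}" using idx_range[OF a] t L by simp
  have "nx n (idx n a t) = idx n a (Suc t)" using idx_nx[OF a] t L by simp
  then have "w = idx n a t \<or> w = idx n a (Suc t)" using Gv[OF m w t(2)] by simp
  then show ?thesis using t by auto
qed

lemma ch_inter:
  assumes a1: "a1 \<in> {1..n}" and L1: "1 \<le> L1" "L1 < n"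
    and a2: "a2 \<in> {1..n}" and L2: "1 \<le> L2" "L2 < n"
    and disj: "idx n a1 ` {0..<L1} \<inter> idx n a2 ` {0..<L2} = {}"
  shows "path_image (ch a1 L1) \<inter> path_image (ch a2 L2) \<subseteq> P ` (idx n a1 ` {0..L1} \<inter> idx n a2 ` {0..L2})"
proof
  fix z assume z: "z \<in> path_image (ch a1 L1) \<inter> path_image (ch a2 L2)"
  obtain t1 where t1: "t1 < L1" "z \<in> path_image (G (idx n a1 t1))" using z ch_img[OF a1 L1] by auto
  obtain t2 where t2: "t2 < L2" "z \<in> path_image (G (idx n a2 t2))" using z ch_img[OF a2 L2] by auto
  have m: "idx n a1 t1 \<in> {1..n}" "idx n a2 t2 \<in> {1..n}"
    using idx_range[OF a1] idx_range[OF a2] t1 t2 L1 L2 by simp_all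
  have ne: "idx n a1 t1 \<noteq> idx n a2 t2"
  proof
    assume "idx n a1 t1 = idx n a2 t2"
    moreover have "idx n a1 t1 \<in> idx n a1 ` {0..<L1}" by (rule imageI) (use t1 in simp)
    moreover have "idx n a2 t2 \<in> idx n a2 ` {0..<L2}" by (rule imageI) (use t2 in simp)
    ultimately show False using disj by (metis IntI empty_iff)
  qed
  have nx1: "nx n (idx n a1 t1) = idx n a1 (Suc t1)" using idx_nx[OF a1] t1 L1 by simp
  have nx2: "nx n (idx n a2 t2) = idx n a2 (Suc t2)" using idx_nx[OF a2] t2 L2 by simp
  have "z \<in> path_image (G (idx n a1 t1)) \<inter> path_image (G (idx n a2 t2))" using t1(2) t2(2) by (rule IntI)
  then have "z \<in> P ` ({idx n a1 t1, nx n (idx n a1 t1)} \<inter> {idx n a2 t2, nx n (idx n a2 t2)})"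
    by (rule subsetD[OF Gi[OF m ne]])
  then have zP: "z \<in> P ` ({idx n a1 t1, idx n a1 (Suc t1)} \<inter> {idx n a2 t2, idx n a2 (Suc t2)})"
    unfolding nx1 nx2 .
  have "t1 \<in> {0..L1}" "Suc t1 \<in> {0..L1}" using t1 by auto
  then have s1: "{idx n a1 t1, idx n a1 (Suc t1)} \<subseteq> idx n a1 ` {0..L1}" by (simp add: imageI)
  have "t2 \<in> {0..L2}" "Suc t2 \<in> {0..L2}" using t2 by auto
  then have s2: "{idx n a2 t2, idx n a2 (Suc t2)} \<subseteq> idx n a2 ` {0..L2}" by (simp add: imageI)
  have "({idx n a1 t1, idx n a1 (Suc t1)} \<inter> {idx n a2 t2, idx n a2 (Suc t2)}) \<subseteq> idx n a1 ` {0..L1} \<inter> idx n a2 ` {0..L2}"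
    using s1 s2 by (rule Int_mono)
  then show "z \<in> P ` (idx n a1 ` {0..L1} \<inter> idx n a2 ` {0..L2})" by (rule subsetD[OF image_mono zP])
qed

end



context cyc begin

lemma G_sub_ch:
  assumes a: "a \<in> {1..n}" and L: "1 \<le> L" "L < n" and t: "t < L"
  shows "path_image (G (idx n a t)) \<subseteq> path_image (ch a L)"
  unfolding ch_img[OF a L] using t by blast

lemma P_in_G: "m \<in> {1..n} \<Longrightarrow> P m \<in> path_image (G m)"
  using Gs pathstart_in_path_image by metis

lemma cyc_cross:
  assumes ij: "1 \<le> i" "i < j" "j < ka" "ka < kb" "kb \<le> n"
  and d: "arc d" "pathstart d = P i" "pathfinish d = P ka"
  and dG: "\<And>m. m \<in> {1..n} \<Longrightarrow> path_image d \<inter> path_image (G m) \<subseteq> {P i, P ka}"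
  and e: "arc e" "pathstart e = P j" "pathfinish e = P kb"
  and ed: "path_image e \<inter> path_image d = {}"
  and CC: "CC = (\<Union>m\<in>{1..n}. path_image (G m))"
  and side: "(path_image d - {P i, P ka} \<subseteq> interior (CC \<union> inside CC) \<and>
              path_image e - {P j, P kb} \<subseteq> interior (CC \<union> inside CC)) \<or>
             (path_image d - {P i, P ka} \<subseteq> - (CC \<union> inside CC) \<and>
              path_image e - {P j, P kb} \<subseteq> - (CC \<union> inside CC))"
  shows False
proof -
  define L1 where "L1 = ka - i"
  define L2 where "L2 = n - ka + i"
  have i1: "i \<in> {1..n}" and ka1: "ka \<in> {1..n}" and j1: "j \<in> {1..n}" and kb1: "kb \<in> {1..n}"
    using ij by auto
  have L1b: "1 \<le> L1" "L1 < n" using ij unfolding L1_def by auto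
  have L2b: "1 \<le> L2" "L2 < n" using ij unfolding L2_def by auto
  define c1 where "c1 = ch i L1"
  define c2' where "c2' = ch ka L2"
  define c2 where "c2 = reversepath c2'"
  have p1: "arc c1" "pathstart c1 = P i" "pathfinish c1 = P (idx n i L1)"
    using ch_props[OF i1 L1b] unfolding c1_def by auto
  have p2: "arc c2'" "pathstart c2' = P ka" "pathfinish c2' = P (idx n ka L2)"
    using ch_props[OF ka1 L2b] unfolding c2'_def by auto
  have idx1: "idx n i L1 = ka" using ij unfolding idx_def L1_def by auto
  have idx2: "idx n ka L2 = i" using ij unfolding idx_def L2_def by auto
  have c1: "arc c1" "pathstart c1 = P i" "pathfinish c1 = P ka" using p1 idx1 by auto
  have c2: "arc c2" "pathstart c2 = P i" "pathfinish c2 = P ka"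
    using p2 idx2 unfolding c2_def by (auto simp: arc_reversepath)
  have img2: "path_image c2 = path_image (ch ka L2)" unfolding c2_def c2'_def by simp
  have V1: "idx n i ` {0..L1} = {i..ka}"
    using idx_image[OF i1 L1b(2)] ij unfolding L1_def by auto
  have V2: "idx n ka ` {0..L2} = {ka..n} \<union> {1..i}"
  proof -
    have "\<not> ka + L2 \<le> n" "ka + L2 - n = i" using ij unfolding L2_def by auto
    then show ?thesis using idx_image[OF ka1 L2b(2)] by simp
  qed
  have E1: "idx n i ` {0..<L1} \<subseteq> {i..<ka}"
  proof
    fix w assume "w \<in> idx n i ` {0..<L1}"
    then obtain t where "t < L1" "w = idx n i t" by auto
    then show "w \<in> {i..<ka}" using ij unfolding idx_def L1_def by auto
  qed
  have E2: "idx n ka ` {0..<L2} \<subseteq> {ka..n} \<union> {1..<i}"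
  proof
    fix w assume "w \<in> idx n ka ` {0..<L2}"
    then obtain t where "t < L2" "w = idx n ka t" by auto
    then show "w \<in> {ka..n} \<union> {1..<i}" using ij unfolding idx_def L2_def by auto
  qed
  have disj: "idx n i ` {0..<L1} \<inter> idx n ka ` {0..<L2} = {}"
  proof -
    have "{i..<ka} \<inter> ({ka..n} \<union> {1..<i}) = {}" by auto
    then show ?thesis using E1 E2 by blast
  qed
  have pi: "P i \<in> path_image c1" "P ka \<in> path_image c1" "P i \<in> path_image c2" "P ka \<in> path_image c2"
    using c1 c2 by (metis pathstart_in_path_image pathfinish_in_path_image)+
  have pd: "P i \<in> path_image d" "P ka \<in> path_image d"
    using d by (metis pathstart_in_path_image pathfinish_in_path_image)+
  have i12: "path_image c1 \<inter> path_image c2 = {P i, P ka}"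
  proof
    have "path_image c1 \<inter> path_image c2 \<subseteq> P ` (idx n i ` {0..L1} \<inter> idx n ka ` {0..L2})"
      using ch_inter[OF i1 L1b ka1 L2b disj] unfolding c1_def img2 .
    also have "\<dots> = P ` ({i..ka} \<inter> ({ka..n} \<union> {1..i}))" unfolding V1 V2 ..
    also have "\<dots> \<subseteq> P ` {i, ka}" by (rule image_mono) auto
    finally show "path_image c1 \<inter> path_image c2 \<subseteq> {P i, P ka}" by simp
    show "{P i, P ka} \<subseteq> path_image c1 \<inter> path_image c2" using pi by blast
  qed
  have chd: "path_image (ch a L) \<inter> path_image d \<subseteq> {P i, P ka}"
    if a: "a \<in> {1..n}" and L: "1 \<le> L" "L < n" for a L
  proof
    fix z assume z: "z \<in> path_image (ch a L) \<inter> path_image d"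
    then obtain t where t: "t < L" "z \<in> path_image (G (idx n a t))" using ch_img[OF a L] by auto
    have m: "idx n a t \<in> {1..n}" using idx_range[OF a] t L by simp
    have "z \<in> path_image d \<inter> path_image (G (idx n a t))" using z t by blast
    then show "z \<in> {P i, P ka}" using dG[OF m] by blast
  qed
  have i1d: "path_image c1 \<inter> path_image d = {P i, P ka}"
    using chd[OF i1 L1b] pi pd unfolding c1_def by blast
  have i2d: "path_image c2 \<inter> path_image d = {P i, P ka}"
    using chd[OF ka1 L2b] pi pd unfolding img2 by blast
  have xin: "P j \<in> path_image c1"
  proof -
    have "idx n i (j - i) = j" using ij unfolding idx_def by auto
    moreover have "j - i < L1" using ij unfolding L1_def by auto
    ultimately have "path_image (G j) \<subseteq> path_image c1"
      using G_sub_ch[OF i1 L1b, of "j - i"] unfolding c1_def by simp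
    then show ?thesis using P_in_G[OF j1] by blast
  qed
  have yin: "P kb \<in> path_image c2"
  proof -
    have "idx n ka (kb - ka) = kb" using ij unfolding idx_def by auto
    moreover have "kb - ka < L2" using ij unfolding L2_def by auto
    ultimately have "path_image (G kb) \<subseteq> path_image c2"
      using G_sub_ch[OF ka1 L2b, of "kb - ka"] unfolding img2 by simp
    then show ?thesis using P_in_G[OF kb1] by blast
  qed
  have xout: "P j \<notin> path_image c2"
  proof
    assume "P j \<in> path_image c2"
    then have "j \<in> idx n ka ` {0..L2}" using ch_vert[OF ka1 L2b j1] unfolding img2 by blast
    then show False unfolding V2 using ij by auto
  qed
  have yout: "P kb \<notin> path_image c1"
  proof
    assume "P kb \<in> path_image c1"
    then have "kb \<in> idx n i ` {0..L1}" using ch_vert[OF i1 L1b kb1] unfolding c1_def by blast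
    then show False unfolding V1 using ij by auto
  qed
  have Ceq: "CC = path_image c1 \<union> path_image c2"
  proof
    show "path_image c1 \<union> path_image c2 \<subseteq> CC"
    proof -
      have "path_image (ch a L) \<subseteq> CC" if a: "a \<in> {1..n}" and L: "1 \<le> L" "L < n" for a L
      proof
        fix z assume "z \<in> path_image (ch a L)"
        then obtain t where t: "t < L" "z \<in> path_image (G (idx n a t))" using ch_img[OF a L] by auto
        have m: "idx n a t \<in> {1..n}" using idx_range[OF a] t L by simp
        show "z \<in> CC" unfolding CC using m t(2) by blast
      qed
      then show ?thesis using i1 L1b ka1 L2b unfolding c1_def img2 by blast
    qed
    show "CC \<subseteq> path_image c1 \<union> path_image c2"
    proof
      fix z assume "z \<in> CC"
      then obtain m where m: "m \<in> {1..n}" "z \<in> path_image (G m)" unfolding CC by blast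
      show "z \<in> path_image c1 \<union> path_image c2"
      proof (cases "m < i")
        case True
        have "idx n ka (m + n - ka) = m" using ij True m unfolding idx_def by auto
        moreover have "m + n - ka < L2" using ij True m unfolding L2_def by auto
        ultimately have "path_image (G m) \<subseteq> path_image c2"
          using G_sub_ch[OF ka1 L2b, of "m + n - ka"] unfolding img2 by simp
        then show ?thesis using m by blast
      next
        case F1: False
        show ?thesis
        proof (cases "m < ka")
          case True
          have "idx n i (m - i) = m" using ij F1 m unfolding idx_def by auto
          moreover have "m - i < L1" using ij True F1 unfolding L1_def by auto
          ultimately have "path_image (G m) \<subseteq> path_image c1"
            using G_sub_ch[OF i1 L1b, of "m - i"] unfolding c1_def by simp
          then show ?thesis using m by blast
        next
          case False
          have "idx n ka (m - ka) = m" using ij False m unfolding idx_def by auto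
          moreover have "m - ka < L2" using ij False m unfolding L2_def by auto
          ultimately have "path_image (G m) \<subseteq> path_image c2"
            using G_sub_ch[OF ka1 L2b, of "m - ka"] unfolding img2 by simp
          then show ?thesis using m by blast
        qed
      qed
    qed
  qed
  have Jfr: "frontier (outside CC) = CC" and Jop: "open (outside CC)"
    using jordan2[OF c1(1) c2(1) c1(2,3) c2(2,3) i12 Ceq] by blast+
  have OC: "outside CC \<inter> CC = {}" by (simp add: outside_no_overlap)
  have OI: "inside CC \<inter> outside CC = {}" by (simp add: inside_Int_outside)
  have intD: "interior (CC \<union> inside CC) \<subseteq> inside CC"
  proof
    fix z assume z: "z \<in> interior (CC \<union> inside CC)"
    have zD: "z \<in> CC \<union> inside CC" using z interior_subset by blast
    have "z \<notin> CC"
    proof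
      assume "z \<in> CC"
      then have "z \<in> closure (outside CC)" using Jfr frontier_def by (metis Diff_iff)
      then have "interior (CC \<union> inside CC) \<inter> outside CC \<noteq> {}"
        using z open_Int_closure_eq_empty[of "interior (CC \<union> inside CC)" "outside CC"] by blast
      then show False using interior_subset[of "CC \<union> inside CC"] OC OI by blast
    qed
    then show "z \<in> inside CC" using zD by blast
  qed
  have outD: "- (CC \<union> inside CC) \<subseteq> outside CC" by (simp add: outside_inside)
  have side': "(path_image d - {P i, P ka} \<subseteq> inside (path_image c1 \<union> path_image c2) \<and>
               path_image e - {P j, P kb} \<subseteq> inside (path_image c1 \<union> path_image c2)) \<or>
              (path_image d - {P i, P ka} \<subseteq> outside (path_image c1 \<union> path_image c2) \<and>
               path_image e - {P j, P kb} \<subseteq> outside (path_image c1 \<union> path_image c2))"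
    using side intD outD unfolding Ceq[symmetric] by blast
  show False
    by (rule crossing[OF c1(1) c2(1) d(1) e(1) c1(2,3) c2(2,3) d(2,3) e(2,3) i12 i1d i2d xin xout yin yout ed side'])
qed

end



lemma stack_edges_mono: "E \<subseteq> stack_edges E s"
  by (induction s arbitrary: E) (auto, fastforce)

lemma stack_edges_in: "(w,x,y) \<in> set s \<Longrightarrow> {w,x} \<in> stack_edges E s \<and> {w,y} \<in> stack_edges E s"
proof (induction s arbitrary: E)
  case Nil then show ?case by simp
next
  case (Cons t s)
  obtain w' x' y' where t: "t = (w',x',y')" by (cases t) auto
  show ?case
  proof (cases "(w,x,y) = t")
    case True
    then show ?thesis using t stack_edges_mono[of "E \<union> {{w', x'}, {w', y'}}" s] by auto
  next
    case False
    then have "(w,x,y) \<in> set s" using Cons.prems by auto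
    then show ?thesis using Cons.IH t by simp
  qed
qed

definition orient :: "('a \<Rightarrow> complex) \<Rightarrow> ('a set \<Rightarrow> real \<Rightarrow> complex) \<Rightarrow> 'a \<Rightarrow> 'a \<Rightarrow> real \<Rightarrow> complex" where
  "orient pos \<gamma> x y = (if pathstart (\<gamma> {x,y}) = pos x then \<gamma> {x,y} else reversepath (\<gamma> {x,y}))"

lemma orient_props:
  assumes pe: "plane_embedding V E pos \<gamma>" and xy: "{x,y} \<in> E" "x \<noteq> y" "x \<in> V" "y \<in> V"
  shows "arc (orient pos \<gamma> x y) \<and> pathstart (orient pos \<gamma> x y) = pos x \<and> pathfinish (orient pos \<gamma> x y) = pos y
    \<and> path_image (orient pos \<gamma> x y) = path_image (\<gamma> {x,y})
    \<and> path_image (\<gamma> {x,y}) \<inter> pos ` V = {pos x, pos y}"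
proof -
  have inj: "inj_on pos V" using pe unfolding plane_embedding_def by blast
  have pxy: "pos x \<noteq> pos y" using inj xy by (meson inj_on_eq_iff)
  obtain x' y' where e: "{x,y} = {x',y'}" "arc (\<gamma> {x,y})"
    "(pathstart (\<gamma> {x,y}) = pos x' \<and> pathfinish (\<gamma> {x,y}) = pos y') \<or>
     (pathstart (\<gamma> {x,y}) = pos y' \<and> pathfinish (\<gamma> {x,y}) = pos x')"
    "path_image (\<gamma> {x,y}) \<inter> pos ` V = {pos x', pos y'}"
    using pe xy(1) unfolding plane_embedding_def by metis
  have se: "(pathstart (\<gamma> {x,y}) = pos x \<and> pathfinish (\<gamma> {x,y}) = pos y) \<or>
     (pathstart (\<gamma> {x,y}) = pos y \<and> pathfinish (\<gamma> {x,y}) = pos x)"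
    using e(1,3) by (auto simp: doubleton_eq_iff)
  have im: "path_image (\<gamma> {x,y}) \<inter> pos ` V = {pos x, pos y}" using e(1,4) by (auto simp: doubleton_eq_iff)
  show ?thesis
  proof (cases "pathstart (\<gamma> {x,y}) = pos x")
    case True
    then show ?thesis using se e(2) im pxy unfolding orient_def by auto
  next
    case False
    then show ?thesis using se e(2) im pxy unfolding orient_def by (auto simp: arc_reversepath)
  qed
qed

lemma not_cycle_edge:
  assumes inj: "inj_on v {1..n}" and ab: "1 \<le> a" "a < b" "b \<le> n" "b \<noteq> Suc a" "\<not> (a = 1 \<and> b = n)"
  shows "{v a, v b} \<notin> cycle_edges v n"
proof
  assume "{v a, v b} \<in> cycle_edges v n"
  then consider k where "1 \<le> k" "k < n" "{v a, v b} = {v k, v (Suc k)}" | "{v a, v b} = {v n, v 1}"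
    unfolding cycle_edges_def by blast
  then show False
  proof cases
    case 1
    have mem: "a \<in> {1..n}" "b \<in> {1..n}" "k \<in> {1..n}" "Suc k \<in> {1..n}" using ab 1 by auto
    from 1(3) have "(v a = v k \<and> v b = v (Suc k)) \<or> (v a = v (Suc k) \<and> v b = v k)"
      by (auto simp: doubleton_eq_iff)
    then have "(a = k \<and> b = Suc k) \<or> (a = Suc k \<and> b = k)"
      using inj mem by (metis inj_on_eq_iff)
    then show False using ab by auto
  next
    case 2
    have mem: "a \<in> {1..n}" "b \<in> {1..n}" "n \<in> {1..n}" "1 \<in> {1..n}" using ab by auto
    from 2 have "(v a = v n \<and> v b = v 1) \<or> (v a = v 1 \<and> v b = v n)"
      by (auto simp: doubleton_eq_iff)
    then have "(a = n \<and> b = 1) \<or> (a = 1 \<and> b = n)"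
      using inj mem by (metis inj_on_eq_iff)
    then show False using ab by auto
  qed
qed

lemma nx_range: "m \<in> {1..n} \<Longrightarrow> nx n m \<in> {1..n}"
  by (auto simp: nx_def)

lemma nx_pair: "3 \<le> n \<Longrightarrow> m \<in> {1..n} \<Longrightarrow> m' \<in> {1..n} \<Longrightarrow> {m, nx n m} = {m', nx n m'} \<Longrightarrow> m = m'"
  by (auto simp: nx_def doubleton_eq_iff split: if_splits)

lemma nx_ne: "3 \<le> n \<Longrightarrow> m \<in> {1..n} \<Longrightarrow> nx n m \<noteq> m"
  by (auto simp: nx_def)

lemma cycle_edges_eq: "cycle_edges v n = (\<lambda>m. {v m, v (nx n m)}) ` {1..n}" if "1 \<le> n"
proof
  show "cycle_edges v n \<subseteq> (\<lambda>m. {v m, v (nx n m)}) ` {1..n}"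
  proof
    fix e assume "e \<in> cycle_edges v n"
    then consider k where "1 \<le> k" "k < n" "e = {v k, v (Suc k)}" | "e = {v n, v 1}"
      unfolding cycle_edges_def by blast
    then show "e \<in> (\<lambda>m. {v m, v (nx n m)}) ` {1..n}"
    proof cases
      case 1
      then have "e = {v k, v (nx n k)}" "k \<in> {1..n}" by (auto simp: nx_def)
      then show ?thesis by blast
    next
      case 2
      then have "e = {v n, v (nx n n)}" "n \<in> {1..n}" using that by (auto simp: nx_def)
      then show ?thesis by blast
    qed
  qed
  show "(\<lambda>m. {v m, v (nx n m)}) ` {1..n} \<subseteq> cycle_edges v n"
  proof
    fix e assume "e \<in> (\<lambda>m. {v m, v (nx n m)}) ` {1..n}"
    then obtain m where m: "m \<in> {1..n}" "e = {v m, v (nx n m)}" by blast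
    show "e \<in> cycle_edges v n"
    proof (cases "m < n")
      case True
      then have "e = {v m, v (Suc m)}" "1 \<le> m" using m by (auto simp: nx_def)
      then show ?thesis unfolding cycle_edges_def using True by blast
    next
      case False
      then have "e = {v n, v 1}" using m by (auto simp: nx_def)
      then show ?thesis unfolding cycle_edges_def by blast
    qed
  qed
qed



lemma pair_lemma:
  assumes osh: "one_sided_ham_cycle V E pos \<gamma> v n"
    and ij: "1 \<le> i" "i < j" "j < ka" "ka < kb" "kb \<le> n"
    and dE: "{v i, v ka} \<in> E" and eE: "{v j, v kb} \<in> E"
    and side: "(open_edge pos \<gamma> {v i, v ka} \<subseteq> interior ((\<Union>e\<in>cycle_edges v n. path_image (\<gamma> e)) \<union> inside (\<Union>e\<in>cycle_edges v n. path_image (\<gamma> e))) \<and>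
                open_edge pos \<gamma> {v j, v kb} \<subseteq> interior ((\<Union>e\<in>cycle_edges v n. path_image (\<gamma> e)) \<union> inside (\<Union>e\<in>cycle_edges v n. path_image (\<gamma> e)))) \<or>
               (open_edge pos \<gamma> {v i, v ka} \<subseteq> - ((\<Union>e\<in>cycle_edges v n. path_image (\<gamma> e)) \<union> inside (\<Union>e\<in>cycle_edges v n. path_image (\<gamma> e))) \<and>
                open_edge pos \<gamma> {v j, v kb} \<subseteq> - ((\<Union>e\<in>cycle_edges v n. path_image (\<gamma> e)) \<union> inside (\<Union>e\<in>cycle_edges v n. path_image (\<gamma> e))))"
  shows False
proof -
  have n3: "3 \<le> n" and bij: "bij_betw v {1..n} V" and CEE: "cycle_edges v n \<subseteq> E"
    and pe: "plane_embedding V E pos \<gamma>"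
    using osh unfolding one_sided_ham_cycle_def by auto
  have vinj: "inj_on v {1..n}" using bij bij_betw_def by blast
  have vV: "\<And>m. m \<in> {1..n} \<Longrightarrow> v m \<in> V" using bij bij_betwE by blast
  have posinj: "inj_on pos V" using pe unfolding plane_embedding_def by blast
  have peI: "\<And>e f. e \<in> E \<Longrightarrow> f \<in> E \<Longrightarrow> e \<noteq> f \<Longrightarrow> path_image (\<gamma> e) \<inter> path_image (\<gamma> f) \<subseteq> pos ` (e \<inter> f)"
    using pe unfolding plane_embedding_def by blast
  define P where "P = (\<lambda>m. pos (v m))"
  define G where "G = (\<lambda>m. orient pos \<gamma> (v m) (v (nx n m)))"
  have Pinj: "inj_on P {1..n}"
  proof (rule inj_onI)
    fix a b assume a: "a \<in> {1..n}" and b: "b \<in> {1..n}" and eq: "P a = P b"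
    have "v a = v b" using eq posinj vV[OF a] vV[OF b] unfolding P_def by (meson inj_on_eq_iff)
    then show "a = b" using vinj a b by (meson inj_on_eq_iff)
  qed
  have vne: "\<And>a b. a \<in> {1..n} \<Longrightarrow> b \<in> {1..n} \<Longrightarrow> a \<noteq> b \<Longrightarrow> v a \<noteq> v b"
    using vinj by (meson inj_on_eq_iff)
  have ceE: "{v m, v (nx n m)} \<in> E" if "m \<in> {1..n}" for m
  proof -
    have "{v m, v (nx n m)} \<in> cycle_edges v n" using cycle_edges_eq[of n v] n3 that by auto
    then show ?thesis using CEE by blast
  qed
  have Gp: "arc (G m) \<and> pathstart (G m) = P m \<and> pathfinish (G m) = P (nx n m)
    \<and> path_image (G m) = path_image (\<gamma> {v m, v (nx n m)})
    \<and> path_image (\<gamma> {v m, v (nx n m)}) \<inter> pos ` V = {P m, P (nx n m)}" if m: "m \<in> {1..n}" for m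
  proof -
    have "v m \<noteq> v (nx n m)" using vne[OF m nx_range[OF m]] nx_ne[OF n3 m] by metis
    then show ?thesis unfolding G_def P_def
      using orient_props[OF pe ceE[OF m] _ vV[OF m] vV[OF nx_range[OF m]]] by blast
  qed
  interpret cyc n P G
  proof
    show "3 \<le> n" by (rule n3)
    show "inj_on P {1..n}" by (rule Pinj)
    fix m assume m: "m \<in> {1..n}"
    show "arc (G m)" using Gp[OF m] by blast
    show "pathstart (G m) = P m" using Gp[OF m] by blast
    show "pathfinish (G m) = P (nx n m)" using Gp[OF m] by blast
  next
    fix m w assume m: "m \<in> {1..n}" and w: "w \<in> {1..n}" and Pw: "P w \<in> path_image (G m)"
    have "P w \<in> pos ` V" unfolding P_def using vV[OF w] by blast
    then have "P w \<in> {P m, P (nx n m)}" using Gp[OF m] Pw by blast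
    then show "w = m \<or> w = nx n m" using Pinj w m nx_range[OF m] by (auto simp: inj_on_eq_iff)
  next
    fix m m' assume m: "m \<in> {1..n}" and m': "m' \<in> {1..n}" and ne: "m \<noteq> m'"
    have ne2: "{v m, v (nx n m)} \<noteq> {v m', v (nx n m')}"
    proof
      assume eq: "{v m, v (nx n m)} = {v m', v (nx n m')}"
      have "v ` {m, nx n m} = v ` {m', nx n m'}" using eq by simp
      moreover have "{m, nx n m} \<subseteq> {1..n}" "{m', nx n m'} \<subseteq> {1..n}"
        using m m' nx_range[OF m] nx_range[OF m'] by auto
      ultimately have "{m, nx n m} = {m', nx n m'}"
        using inj_on_image_eq_iff[OF vinj] by blast
      then show False using nx_pair[OF n3 m m'] ne by blast
    qed
    have "path_image (G m) \<inter> path_image (G m') \<subseteq> pos ` ({v m, v (nx n m)} \<inter> {v m', v (nx n m')})"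
      using peI[OF ceE[OF m] ceE[OF m'] ne2] Gp[OF m] Gp[OF m'] by simp
    also have "{v m, v (nx n m)} \<inter> {v m', v (nx n m')} = v ` ({m, nx n m} \<inter> {m', nx n m'})"
    proof -
      have "v ` ({m, nx n m} \<inter> {m', nx n m'}) = v ` {m, nx n m} \<inter> v ` {m', nx n m'}"
        by (rule inj_on_image_Int[OF vinj]) (use m m' nx_range[OF m] nx_range[OF m'] in auto)
      then show ?thesis by simp
    qed
    also have "pos ` (v ` ({m, nx n m} \<inter> {m', nx n m'})) = P ` ({m, nx n m} \<inter> {m', nx n m'})"
      unfolding P_def by (simp add: image_image)
    finally show "path_image (G m) \<inter> path_image (G m') \<subseteq> P ` ({m, nx n m} \<inter> {m', nx n m'})" .
  qed
  have i1: "i \<in> {1..n}" and ka1: "ka \<in> {1..n}" and j1: "j \<in> {1..n}" and kb1: "kb \<in> {1..n}"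
    using ij by auto
  have dnc: "{v i, v ka} \<notin> cycle_edges v n" using not_cycle_edge[OF vinj, of i ka] ij by auto
  have enc: "{v j, v kb} \<notin> cycle_edges v n" using not_cycle_edge[OF vinj, of j kb] ij by auto
  define d where "d = orient pos \<gamma> (v i) (v ka)"
  define e where "e = orient pos \<gamma> (v j) (v kb)"
  have dp: "arc d \<and> pathstart d = P i \<and> pathfinish d = P ka \<and> path_image d = path_image (\<gamma> {v i, v ka})"
    using orient_props[OF pe dE vne[OF i1 ka1] vV[OF i1] vV[OF ka1]] ij unfolding d_def P_def by auto
  have ep: "arc e \<and> pathstart e = P j \<and> pathfinish e = P kb \<and> path_image e = path_image (\<gamma> {v j, v kb})"
    using orient_props[OF pe eE vne[OF j1 kb1] vV[OF j1] vV[OF kb1]] ij unfolding e_def P_def by auto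
  have dG: "path_image d \<inter> path_image (G m) \<subseteq> {P i, P ka}" if m: "m \<in> {1..n}" for m
  proof -
    have "{v i, v ka} \<noteq> {v m, v (nx n m)}"
      using dnc cycle_edges_eq[of n v] n3 m by auto
    then have "path_image d \<inter> path_image (G m) \<subseteq> pos ` ({v i, v ka} \<inter> {v m, v (nx n m)})"
      using peI[OF dE ceE[OF m]] dp Gp[OF m] by simp
    also have "\<dots> \<subseteq> pos ` {v i, v ka}" by (rule image_mono) blast
    finally show ?thesis unfolding P_def by simp
  qed
  have ed: "path_image e \<inter> path_image d = {}"
  proof -
    have dis: "{v j, v kb} \<inter> {v i, v ka} = {}"
      using vne[OF j1 i1] vne[OF j1 ka1] vne[OF kb1 i1] vne[OF kb1 ka1] ij by auto
    have "{v j, v kb} \<noteq> {v i, v ka}" using dis vne[OF j1 kb1] ij by auto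
    then have "path_image e \<inter> path_image d \<subseteq> pos ` ({v j, v kb} \<inter> {v i, v ka})"
      using peI[OF eE dE] dp ep by simp
    then show ?thesis using dis by simp
  qed
  have CCeq: "(\<Union>e\<in>cycle_edges v n. path_image (\<gamma> e)) = (\<Union>m\<in>{1..n}. path_image (G m))"
  proof -
    have "(\<Union>e\<in>cycle_edges v n. path_image (\<gamma> e)) = (\<Union>m\<in>{1..n}. path_image (\<gamma> {v m, v (nx n m)}))"
      using cycle_edges_eq[of n v] n3 by (simp add: image_image)
    also have "\<dots> = (\<Union>m\<in>{1..n}. path_image (G m))"
      using Gp by (intro SUP_cong) auto
    finally show ?thesis .
  qed
  have od: "open_edge pos \<gamma> {v i, v ka} = path_image d - {P i, P ka}"
    unfolding open_edge_def P_def using dp by simp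
  have oe: "open_edge pos \<gamma> {v j, v kb} = path_image e - {P j, P kb}"
    unfolding open_edge_def P_def using ep by simp
  show False
    apply (rule cyc_cross[OF ij _ _ _ dG _ _ _ ed CCeq])
    using dp ep side unfolding od oe by auto
qed



lemma three_elems:
  assumes "finite K" "3 \<le> card K"
  obtains x y z where "x \<in> K" "y \<in> K" "z \<in> K" "x \<noteq> y" "x \<noteq> z" "y \<noteq> z"
proof -
  have "Suc (Suc (Suc 0)) \<le> card K" using assms by simp
  then obtain x B where B: "K = insert x B" "x \<notin> B" "Suc (Suc 0) \<le> card B" "finite B"
    using card_le_Suc_iff[of "Suc (Suc 0)" K] by blast
  then obtain y B2 where B2: "B = insert y B2" "y \<notin> B2" "Suc 0 \<le> card B2" "finite B2"
    using card_le_Suc_iff[of "Suc 0" B] by blast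
  then obtain z B3 where B3: "B2 = insert z B3" "z \<notin> B3"
    using card_le_Suc_iff[of 0 B2] by blast
  show ?thesis using that[of x y z] B B2 B3 by auto
qed

theorem claim1:
  fixes a b c :: 'a and s :: "('a \<times> 'a \<times> 'a) list" and v :: "nat \<Rightarrow> 'a" and n :: nat
  assumes "is_2tree_construction a b c s"
    and "n = card (tt_V a b c s)"
    and "bij_betw v {1..n} (tt_V a b c s)"
    and "\<exists>pos \<gamma>. one_sided_ham_cycle (tt_V a b c s) (tt_E a b c s \<union> cycle_edges v n) pos \<gamma> v n"
  shows "\<forall>i j. 1 \<le> i \<longrightarrow> i < j \<longrightarrow> j \<le> n \<longrightarrow> {v i, v j} \<in> tt_E a b c s \<longrightarrow>
           card (X_R v n s i j) \<le> 2"
proof (intro allI impI)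
  fix i j assume h: "1 \<le> i" "i < j" "j \<le> n" "{v i, v j} \<in> tt_E a b c s"
  define V where "V = tt_V a b c s"
  define E where "E = tt_E a b c s \<union> cycle_edges v n"
  obtain pos \<gamma> where osh: "one_sided_ham_cycle V E pos \<gamma> v n" using assms(4) unfolding V_def E_def by blast
  define C where "C = (\<Union>e\<in>cycle_edges v n. path_image (\<gamma> e))"
  have os: "\<forall>k\<in>{2..n}. (\<forall>i\<in>{1..<k}. {v i, v k} \<in> E - cycle_edges v n \<longrightarrow> open_edge pos \<gamma> {v i, v k} \<subseteq> interior (C \<union> inside C)) \<or>
          (\<forall>i\<in>{1..<k}. {v i, v k} \<in> E - cycle_edges v n \<longrightarrow> open_edge pos \<gamma> {v i, v k} \<subseteq> - (C \<union> inside C))"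
    using osh unfolding one_sided_ham_cycle_def Let_def C_def by (elim conjE) assumption
  have bij: "bij_betw v {1..n} V" using osh unfolding one_sided_ham_cycle_def by blast
  have vinj: "inj_on v {1..n}" using bij bij_betw_def by blast
  define K where "K = {k. j < k \<and> k \<le> n \<and> v k \<in> stacked_over s {v i, v j}}"
  have XR: "X_R v n s i j = v ` K" unfolding X_R_def K_def by auto
  have finK: "finite K" unfolding K_def by (rule finite_subset[of _ "{..n}"]) auto
  define Sin where "Sin k \<longleftrightarrow> (\<forall>i\<in>{1..<k}. {v i, v k} \<in> E - cycle_edges v n \<longrightarrow> open_edge pos \<gamma> {v i, v k} \<subseteq> interior (C \<union> inside C))" for k
  define Sout where "Sout k \<longleftrightarrow> (\<forall>i\<in>{1..<k}. {v i, v k} \<in> E - cycle_edges v n \<longrightarrow> open_edge pos \<gamma> {v i, v k} \<subseteq> - (C \<union> inside C))" for k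
  have Kprops: "j < k \<and> k \<le> n \<and> {v i, v k} \<in> E \<and> {v j, v k} \<in> E" if k: "k \<in> K" for k
  proof -
    have k1: "j < k" "k \<le> n" "v k \<in> stacked_over s {v i, v j}" using k unfolding K_def by auto
    then obtain x y where xy: "(v k, x, y) \<in> set s" "{v i, v j} = {x, y}"
      unfolding stacked_over_def by blast
    have "{v k, x} \<in> tt_E a b c s" "{v k, y} \<in> tt_E a b c s"
      using stack_edges_in[OF xy(1)] unfolding tt_E_def by auto
    moreover have "(x = v i \<and> y = v j) \<or> (x = v j \<and> y = v i)" using xy(2) by (auto simp: doubleton_eq_iff)
    ultimately have "{v k, v i} \<in> tt_E a b c s" "{v k, v j} \<in> tt_E a b c s" by auto
    then have "{v i, v k} \<in> E" "{v j, v k} \<in> E" unfolding E_def by (auto simp: insert_commute)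
    then show ?thesis using k1 by simp
  qed
  have SK: "Sin k \<or> Sout k" if "k \<in> K" for k
  proof -
    have "k \<in> {2..n}" using Kprops[OF that] h by auto
    then show ?thesis using os unfolding Sin_def Sout_def by blast
  qed
  have pairlt: "\<not> (Sin k \<and> Sin k') \<and> \<not> (Sout k \<and> Sout k')" if k: "k \<in> K" "k' \<in> K" "k < k'" for k k'
  proof -
    note pk = Kprops[OF k(1)] and pk' = Kprops[OF k(2)]
    have ij: "1 \<le> i" "i < j" "j < k" "k < k'" "k' \<le> n" using h pk pk' k by auto
    have dnc: "{v i, v k} \<notin> cycle_edges v n" using not_cycle_edge[OF vinj, of i k] ij by auto
    have enc: "{v j, v k'} \<notin> cycle_edges v n" using not_cycle_edge[OF vinj, of j k'] ij by auto
    have dE: "{v i, v k} \<in> E - cycle_edges v n" using pk dnc by blast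
    have eE: "{v j, v k'} \<in> E - cycle_edges v n" using pk' enc by blast
    have i1: "i \<in> {1..<k}" and j1: "j \<in> {1..<k'}" using ij by auto
    show ?thesis
    proof (intro conjI notI)
      assume "Sin k \<and> Sin k'"
      then have "open_edge pos \<gamma> {v i, v k} \<subseteq> interior (C \<union> inside C)"
        "open_edge pos \<gamma> {v j, v k'} \<subseteq> interior (C \<union> inside C)"
        using dE eE i1 j1 unfolding Sin_def by blast+
      then show False using pair_lemma[OF osh ij] dE eE unfolding C_def by blast
    next
      assume "Sout k \<and> Sout k'"
      then have "open_edge pos \<gamma> {v i, v k} \<subseteq> - (C \<union> inside C)"
        "open_edge pos \<gamma> {v j, v k'} \<subseteq> - (C \<union> inside C)"
        using dE eE i1 j1 unfolding Sout_def by blast+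
      then show False using pair_lemma[OF osh ij] dE eE unfolding C_def by blast
    qed
  qed
  have pairne: "\<not> (Sin k \<and> Sin k') \<and> \<not> (Sout k \<and> Sout k')" if k: "k \<in> K" "k' \<in> K" "k \<noteq> k'" for k k'
  proof (cases "k < k'")
    case True then show ?thesis using pairlt k by blast
  next
    case False then have "k' < k" using k by simp
    then show ?thesis using pairlt k by blast
  qed
  have "card K \<le> 2"
  proof (rule ccontr)
    assume "\<not> card K \<le> 2"
    then have "3 \<le> card K" by simp
    then obtain x y z where xyz: "x \<in> K" "y \<in> K" "z \<in> K" "x \<noteq> y" "x \<noteq> z" "y \<noteq> z"
      using three_elems[OF finK] by blast
    have "Sin x \<or> Sout x" "Sin y \<or> Sout y" "Sin z \<or> Sout z" using SK xyz by auto
    moreover have "\<not> (Sin x \<and> Sin y) \<and> \<not> (Sout x \<and> Sout y)" using pairne xyz by blast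
    moreover have "\<not> (Sin x \<and> Sin z) \<and> \<not> (Sout x \<and> Sout z)" using pairne xyz by blast
    moreover have "\<not> (Sin y \<and> Sin z) \<and> \<not> (Sout y \<and> Sout z)" using pairne xyz by blast
    ultimately show False by blast
  qed
  then show "card (X_R v n s i j) \<le> 2" unfolding XR using card_image_le[OF finK, of v] by linarith
qed


end
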